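(* There is an absolute constant $c>0$ such that for all $n$, $p\in(0,1)$, $q\in(0,1]$ and $\epsilon>0$, $$\mathrm{CCU}^{\mu_p}_{\frac12-\epsilon}(\mathcal F_q)\ge\mathrm{CC}^{\nu_{p,q}}_{\frac12-\epsilon+\epsilon'}(F),\qquad\epsilon'=2^{-cqn}.$$
   Context: For $S\subseteq[n]$, $f_S(x,y)=\bigoplus_{i\in S}(x_i\oplus y_i)$. $\mathcal F_q=\{(f_S,f_T): |S\triangle T|\le qn\}$. $\mu_p$: $x$ uniform in $\{0,1\}^n$, $y$ obtained from $x$ by flipping each bit independently with probability $p$. $\nu_{p,q}$ is the distribution on Alice-input $(S,x)$ and Bob-input $(T,y)$ ($S,T\subseteq[n]$, $x,y\in\{0,1\}^n$) where $S$ is a uniformly random subset of $[n]$, $T$ is obtained from $S$ by flipping the membership of each $i\in[n]$ independently with probability $q/2$, and $(x,y)\sim\mu_p$ independently of $(S,T)$. $F((S,x),(T,y))=f_T(x,y)=\bigoplus_{i\in T}(x_i\oplus y_i)$. $\mathrm{CC}^{\nu}_\epsilon(F)$ is the minimum communication of a (two-way) protocol between Alice and Bob whose output differs from $F$ with probability at most $\epsilon$ under $\nu$. Uncertain setting: Alice receives $(f,x)$, Bob receives $(g,y)$, with shared public randomness; a public-coin protocol $\epsilon$-computes $\mathcal F$ under $\mu$ if for every $(f,g)\in\mathcal F$ the probability over $(x,y)\sim\mu$ and coins that Bob's output differs from $g(x,y)$ is at most $\epsilon$; $\mathrm{CCU}^\mu_\epsilon(\mathcal F)$ is the minimum over such protocols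 of the worst-case number of bits communicated over all $(f,g)\in\mathcal F$, $(x,y)$ in the support of $\mu$ and coin settings. *)

theory Defs
  imports "HOL-Probability.Probability" "HOL-Library.Extended_Nat"
begin

text \<open>At a leaf, Bob outputs a bit that may depend on his own
input (and, implicitly, on the transcript, i.e. the leaf).\<close>

datatype ('a, 'b) ptree =
    Out "'b \<Rightarrow> bool"
  | ANode "'a \<Rightarrow> bool" "('a, 'b) ptree" "('a, 'b) ptree"
  | BNode "'b \<Rightarrow> bool" "('a, 'b) ptree" "('a, 'b) ptree"

fun run :: "('a, 'b) ptree \<Rightarrow> 'a \<Rightarrow> 'b \<Rightarrow> bool" where
  "run (Out o') a b = o' b"
| "run (ANode m l r) a b = (if m a then run r a b else run l a b)"
| "run (BNode m l r) a b = (if m b then run r a b else run l a b)"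

fun bits :: "('a, 'b) ptree \<Rightarrow> 'a \<Rightarrow> 'b \<Rightarrow> nat" where
  "bits (Out o') a b = 0"
| "bits (ANode m l r) a b = Suc (if m a then bits r a b else bits l a b)"
| "bits (BNode m l r) a b = Suc (if m b then bits r a b else bits l a b)"

fun rand_subset :: "real \<Rightarrow> nat \<Rightarrow> nat set pmf" where
  "rand_subset r 0 = return_pmf {}"
| "rand_subset r (Suc n) =
     bind_pmf (rand_subset r n) (\<lambda>A. map_pmf (\<lambda>b. if b then insert n A else A) (bernoulli_pmf r))"

fun flip_bits :: "real \<Rightarrow> bool list \<Rightarrow> bool list pmf" where
  "flip_bits r [] = return_pmf []"
| "flip_bits r (b # bs) =
     bind_pmf (bernoulli_pmf r) (\<lambda>c. map_pmf (\<lambda>ys. (b \<noteq> c) # ys) (flip_bits r bs))"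

definition mu :: "real \<Rightarrow> nat \<Rightarrow> (bool list \<times> bool list) pmf" where
  "mu p n = bind_pmf (pmf_of_set {xs. length xs = n})
              (\<lambda>x. map_pmf (\<lambda>y. (x, y)) (flip_bits p x))"

definition fS :: "nat set \<Rightarrow> bool list \<Rightarrow> bool list \<Rightarrow> bool" where
  "fS S x y = odd (card {i \<in> S. i < length x \<and> i < length y \<and> x ! i \<noteq> y ! i})"

definition Fq :: "nat \<Rightarrow> real \<Rightarrow>
    ((bool list \<Rightarrow> bool list \<Rightarrow> bool) \<times> (bool list \<Rightarrow> bool list \<Rightarrow> bool)) set" where
  "Fq n q = {(fS S, fS T) | S T. S \<subseteq> {..<n} \<and> T \<subseteq> {..<n}
                                \<and> real (card (S - T \<union> (T - S))) \<le> q * real n}"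

definition nu :: "real \<Rightarrow> real \<Rightarrow> nat \<Rightarrow> ((nat set \<times> bool list) \<times> (nat set \<times> bool list)) pmf" where
  "nu p q n =
     bind_pmf (pmf_of_set (Pow {..<n})) (\<lambda>S.
     bind_pmf (rand_subset (q / 2) n) (\<lambda>D.
     map_pmf (\<lambda>(x, y). ((S, x), (S - D \<union> (D - S), y))) (mu p n)))"

definition Fbig :: "(nat set \<times> bool list) \<Rightarrow> (nat set \<times> bool list) \<Rightarrow> bool" where
  "Fbig A B = fS (fst B) (snd A) (snd B)"

text \<open>Distributional complexity: deterministic protocols, error at most \<epsilon> under \<nu>,
cost = worst case over the support of \<nu>. Inf of the empty set is \<infinity>.\<close>
definition CC_dist :: "('a \<times> 'b) pmf \<Rightarrow> ('a \<Rightarrow> 'b \<Rightarrow> bool) \<Rightarrow> real \<Rightarrow> enat" where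
  "CC_dist \<nu> F \<epsilon> = Inf {enat k | k. \<exists>P :: ('a, 'b) ptree.
       measure_pmf.prob \<nu> {(a, b). run P a b \<noteq> F a b} \<le> \<epsilon>
     \<and> (\<forall>(a, b) \<in> set_pmf \<nu>. bits P a b \<le> k)}"

text \<open>Uncertain setting: Alice gets (f,x), Bob gets (g,y); a public-coin protocol is a
probability distribution over deterministic protocol trees (the public coins select the tree).\<close>
definition CCU :: "('x \<times> 'y) pmf \<Rightarrow> (('x \<Rightarrow> 'y \<Rightarrow> bool) \<times> ('x \<Rightarrow> 'y \<Rightarrow> bool)) set \<Rightarrow> real \<Rightarrow> enat" where
  "CCU \<mu> Fam \<epsilon> = Inf {enat k | k. \<exists>Prot :: (('x \<Rightarrow> 'y \<Rightarrow> bool) \<times> 'x, ('x \<Rightarrow> 'y \<Rightarrow> bool) \<times> 'y) ptree pmf.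
       (\<forall>(f, g) \<in> Fam. measure_pmf.prob (pair_pmf Prot \<mu>)
            {(P, (x, y)). run P (f, x) (g, y) \<noteq> g x y} \<le> \<epsilon>)
     \<and> (\<forall>(f, g) \<in> Fam. \<forall>(x, y) \<in> set_pmf \<mu>. \<forall>P \<in> set_pmf Prot. bits P (f, x) (g, y) \<le> k)}"

end

theory Submission
  imports Defs
begin


fun mapt :: "('a,'b) ptree \<Rightarrow> ('c \<Rightarrow> 'a) \<Rightarrow> ('d \<Rightarrow> 'b) \<Rightarrow> ('c,'d) ptree" where
  "mapt (Out o') fa fb = Out (o' \<circ> fb)"
| "mapt (ANode m l r) fa fb = ANode (m \<circ> fa) (mapt l fa fb) (mapt r fa fb)"
| "mapt (BNode m l r) fa fb = BNode (m \<circ> fb) (mapt l fa fb) (mapt r fa fb)"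

lemma run_mapt: "run (mapt P fa fb) a b = run P (fa a) (fb b)"
  by (induction P) auto

lemma bits_mapt: "bits (mapt P fa fb) a b = bits P (fa a) (fb b)"
  by (induction P) auto

fun trunc :: "nat \<Rightarrow> ('a,'b) ptree \<Rightarrow> ('a,'b) ptree" where
  "trunc k (Out o') = Out o'"
| "trunc 0 (ANode m l r) = Out (\<lambda>_. False)"
| "trunc 0 (BNode m l r) = Out (\<lambda>_. False)"
| "trunc (Suc k) (ANode m l r) = ANode m (trunc k l) (trunc k r)"
| "trunc (Suc k) (BNode m l r) = BNode m (trunc k l) (trunc k r)"

lemma bits_trunc: "bits (trunc k P) a b \<le> k"
  by (induction k P rule: trunc.induct) auto

lemma run_trunc: "bits P a b \<le> k \<Longrightarrow> run (trunc k P) a b = run P a b"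
  by (induction k P rule: trunc.induct) (auto split: if_splits)

lemma set_rand_subset: "D \<in> set_pmf (rand_subset r n) \<Longrightarrow> D \<subseteq> {..<n}"
  apply (induction n arbitrary: D)
   apply (auto split: if_splits)
  by (metis lessThan_iff less_SucI subsetD)+

lemma exp_rand_subset:
  assumes "0 \<le> r" "r \<le> 1"
  shows "(\<integral>\<^sup>+D. ennreal (2 ^ card D) \<partial>rand_subset r n) = ennreal ((1 + r) ^ n)"
proof (induction n)
  case 0
  then show ?case by simp
next
  case (Suc n)
  have "(\<integral>\<^sup>+D. ennreal (2 ^ card D) \<partial>rand_subset r (Suc n))
     = (\<integral>\<^sup>+A. (\<integral>\<^sup>+b. ennreal (2 ^ card (if b then insert n A else A)) \<partial>bernoulli_pmf r) \<partial>rand_subset r n)"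
    by (simp add: map_pmf_def)
  also have "\<dots> = (\<integral>\<^sup>+A. ennreal (1 + r) * ennreal (2 ^ card A) \<partial>rand_subset r n)"
  proof (rule nn_integral_cong_AE, rule AE_pmfI)
    fix A assume "A \<in> set_pmf (rand_subset r n)"
    then have "n \<notin> A" "finite A" using set_rand_subset[of A r n] finite_subset by auto
    then show "(\<integral>\<^sup>+b. ennreal (2 ^ card (if b then insert n A else A)) \<partial>bernoulli_pmf r) = ennreal (1 + r) * ennreal (2 ^ card A)"
      using assms by (simp add: ennreal_mult[symmetric] ennreal_plus[symmetric] del: ennreal_plus)
        (simp add: algebra_simps)
  qed
  also have "\<dots> = ennreal (1 + r) * ennreal ((1 + r) ^ n)"
    by (simp add: nn_integral_cmult Suc)
  also have "\<dots> = ennreal ((1 + r) ^ Suc n)"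
    using assms by (subst ennreal_mult[symmetric]) auto
  finally show ?case .
qed



lemma ln2_ge: "11/20 \<le> ln (2::real)"
proof -
  have "exp (11/10::real) = exp 1 * exp (1/10)" by (simp flip: exp_add)
  also have "\<dots> \<le> 3 * (1 + 2 * (1/10))"
    using exp_le real_exp_bound_lemma[of "1/10"] by (intro mult_mono) auto
  finally have a: "exp (11/10::real) \<le> 4" by simp
  have "exp (11/10::real) = exp (11/20) ^ 2" by (simp flip: exp_of_nat_mult)
  with a have "exp (11/20::real) ^ 2 \<le> 2 ^ 2" by simp
  then have "exp (11/20::real) \<le> 2" by (rule power2_le_imp_le) auto
  then have "ln (exp (11/20::real)) \<le> ln 2" by (subst ln_le_cancel_iff) auto
  then show ?thesis by simp
qed

lemma real_tail:
  assumes "0 < q" "q \<le> 1"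
  shows "(1 + q/2) ^ n * 2 powr (- q * real n) \<le> 2 powr (- (1/20) * q * real n)"
proof -
  have "(1 + q/2) ^ n \<le> exp (q/2) ^ n"
    using assms by (intro power_mono) (auto simp: exp_ge_add_one_self)
  also have "\<dots> = exp (q/2 * real n)" by (simp flip: exp_of_nat_mult add: mult.commute)
  finally have 1: "(1 + q/2) ^ n \<le> exp (q/2 * real n)" .
  have "(1 + q/2) ^ n * 2 powr (- q * real n) \<le> exp (q/2 * real n) * exp (- q * real n * ln 2)"
  proof -
    have "2 powr (- q * real n) = exp (- q * real n * ln 2)" by (simp add: powr_def mult.commute)
    then show ?thesis using 1 by (simp add: mult_right_mono)
  qed
  also have "\<dots> = exp (q/2 * real n - q * real n * ln 2)" by (simp flip: exp_add)
  also have "\<dots> \<le> exp (- (1/20) * q * real n * ln 2)"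
  proof -
    have "0 \<le> q * real n" using assms by simp
    moreover have "1/2 - 19/20 * ln (2::real) \<le> 0" using ln2_ge by simp
    ultimately have "q * real n * (1/2 - 19/20 * ln 2) \<le> 0" by (simp add: mult_nonneg_nonpos)
    then show ?thesis by (simp add: algebra_simps)
  qed
  also have "\<dots> = 2 powr (- (1/20) * q * real n)" by (simp add: powr_def)
  finally show ?thesis .
qed

lemma tail:
  assumes "0 < q" "q \<le> 1"
  shows "emeasure (rand_subset (q/2) n) {D. q * real n < real (card D)}
          \<le> ennreal (2 powr (- (1/20) * q * real n))"
proof -
  let ?M = "rand_subset (q/2) n"
  have "emeasure ?M {D. q * real n < real (card D)} = (\<integral>\<^sup>+D. indicator {D. q * real n < real (card D)} D \<partial>?M)"
    by simp
  also have "\<dots> \<le> (\<integral>\<^sup>+D. ennreal (2 ^ card D) * ennreal (2 powr (- q * real n)) \<partial>?M)"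
  proof (rule nn_integral_mono)
    fix D :: "nat set"
    show "indicator {D. q * real n < real (card D)} D \<le> ennreal (2 ^ card D) * ennreal (2 powr (- q * real n))"
    proof (cases "q * real n < real (card D)")
      case True
      have e: "2 powr (real (card D)) * 2 powr (- q * real n) = 2 powr (real (card D) - q * real n)"
        by (simp add: powr_add[symmetric])
      have "1 \<le> 2 powr (real (card D) - q * real n)"
        using True by (intro ge_one_powr_ge_zero) auto
      then have "1 \<le> 2 powr (real (card D)) * 2 powr (- q * real n)" using e by simp
      then have "1 \<le> 2 ^ card D * 2 powr (- q * real n)" by (simp add: powr_realpow)
      then show ?thesis using True by (simp add: ennreal_mult[symmetric])
    next
      case False then show ?thesis by simp
    qed
  qed
  also have "\<dots> = ennreal ((1 + q/2) ^ n) * ennreal (2 powr (- q * real n))"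
    using assms by (simp add: nn_integral_multc exp_rand_subset)
  also have "\<dots> = ennreal ((1 + q/2) ^ n * 2 powr (- q * real n))"
    using assms by (subst ennreal_mult[symmetric]) auto
  also have "\<dots> \<le> ennreal (2 powr (- (1/20) * q * real n))"
    using real_tail[OF assms] by (rule ennreal_leI)
  finally show ?thesis .
qed



lemma pair_decomp:
  "pair_pmf C (bind_pmf A (\<lambda>s. bind_pmf B (\<lambda>d. map_pmf (g s d) M)))
   = bind_pmf A (\<lambda>s. bind_pmf B (\<lambda>d. map_pmf (\<lambda>(c, z). (c, g s d z)) (pair_pmf C M)))"
proof -
  have "pair_pmf C (bind_pmf A (\<lambda>s. bind_pmf B (\<lambda>d. map_pmf (g s d) M)))
     = bind_pmf C (\<lambda>c. bind_pmf A (\<lambda>s. bind_pmf B (\<lambda>d. bind_pmf M (\<lambda>z. return_pmf (c, g s d z)))))"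
    by (simp add: pair_pmf_def map_pmf_def bind_assoc_pmf bind_return_pmf)
  also have "\<dots> = bind_pmf A (\<lambda>s. bind_pmf C (\<lambda>c. bind_pmf B (\<lambda>d. bind_pmf M (\<lambda>z. return_pmf (c, g s d z)))))"
    by (rule bind_commute_pmf)
  also have "\<dots> = bind_pmf A (\<lambda>s. bind_pmf B (\<lambda>d. bind_pmf C (\<lambda>c. bind_pmf M (\<lambda>z. return_pmf (c, g s d z)))))"
    by (subst bind_commute_pmf) (rule refl)
  also have "\<dots> = bind_pmf A (\<lambda>s. bind_pmf B (\<lambda>d. map_pmf (\<lambda>(c, z). (c, g s d z)) (pair_pmf C M)))"
    by (simp add: pair_pmf_def map_pmf_def bind_assoc_pmf bind_return_pmf)
  finally show ?thesis .
qed

lemma emeasure_pair_pmf: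
  "emeasure (pair_pmf M N) X = (\<integral>\<^sup>+P. emeasure N {z. (P, z) \<in> X} \<partial>M)"
proof -
  have "emeasure (pair_pmf M N) X = (\<integral>\<^sup>+P. (\<integral>\<^sup>+z. indicator X (P, z) \<partial>N) \<partial>M)"
    by (simp add: pair_pmf_def)
  also have "\<dots> = (\<integral>\<^sup>+P. emeasure N {z. (P, z) \<in> X} \<partial>M)"
  proof (rule nn_integral_cong)
    fix P
    have "(\<integral>\<^sup>+z. indicator X (P, z) \<partial>N) = (\<integral>\<^sup>+z. indicator {z. (P, z) \<in> X} z \<partial>N)"
      by (rule nn_integral_cong) (simp add: indicator_def)
    then show "(\<integral>\<^sup>+z. indicator X (P, z) \<partial>N) = emeasure N {z. (P, z) \<in> X}" by simp
  qed
  finally show ?thesis .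
qed

lemma ex_good:
  assumes "emeasure (pair_pmf M N) X \<le> ennreal B"
  shows "\<exists>P\<in>set_pmf M. emeasure N {z. (P, z) \<in> X} \<le> ennreal B"
proof (rule ccontr)
  define f where "f P = emeasure N {z. (P, z) \<in> X}" for P
  assume "\<not> ?thesis"
  then have gt: "\<And>P. P \<in> set_pmf M \<Longrightarrow> ennreal B < f P" by (auto simp: f_def not_le)
  define g where "g P = f P - ennreal B" for P
  have fg: "\<And>P. P \<in> set_pmf M \<Longrightarrow> f P = ennreal B + g P"
    using gt by (simp add: g_def less_imp_le add_diff_self_ennreal)
  have "(\<integral>\<^sup>+P. f P \<partial>M) = (\<integral>\<^sup>+P. ennreal B + g P \<partial>M)"
    by (rule nn_integral_cong_AE) (auto intro!: AE_pmfI simp: fg)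
  also have "\<dots> = ennreal B + (\<integral>\<^sup>+P. g P \<partial>M)"
    by (subst nn_integral_add) (auto simp: measure_pmf.emeasure_space_1)
  finally have eq: "(\<integral>\<^sup>+P. f P \<partial>M) = ennreal B + (\<integral>\<^sup>+P. g P \<partial>M)" .
  have "(\<integral>\<^sup>+P. g P \<partial>M) \<noteq> 0"
  proof
    assume "(\<integral>\<^sup>+P. g P \<partial>M) = 0"
    then have "AE P in M. g P = 0" by (simp add: nn_integral_0_iff_AE)
    then have "\<forall>P\<in>set_pmf M. g P = 0" by (simp add: AE_measure_pmf_iff)
    moreover obtain P where "P \<in> set_pmf M" using set_pmf_not_empty[of M] by blast
    ultimately show False using gt[of P] by (auto simp: g_def diff_eq_0_iff_ennreal)
  qed
  then have "ennreal B < ennreal B + (\<integral>\<^sup>+P. g P \<partial>M)"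
    by (simp add: ennreal_add_left_cancel_less zero_less_iff_neq_zero)
  then have "ennreal B < emeasure (pair_pmf M N) X"
    using eq by (simp add: emeasure_pair_pmf f_def)
  then show False using assms by simp
qed



type_synonym ctree = "((bool list \<Rightarrow> bool list \<Rightarrow> bool) \<times> bool list, (bool list \<Rightarrow> bool list \<Rightarrow> bool) \<times> bool list) ptree"

definition phi :: "nat set \<times> bool list \<Rightarrow> (bool list \<Rightarrow> bool list \<Rightarrow> bool) \<times> bool list" where
  "phi = (\<lambda>(S, x). (fS S, x))"

definition tk :: "nat \<Rightarrow> ((bool list \<Rightarrow> bool list \<Rightarrow> bool) \<times> bool list, (bool list \<Rightarrow> bool list \<Rightarrow> bool) \<times> bool list) ptree
   \<Rightarrow> (nat set \<times> bool list, nat set \<times> bool list) ptree" where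
  "tk k P = trunc k (mapt P phi phi)"

lemma main_bound:
  fixes Prot :: "((bool list \<Rightarrow> bool list \<Rightarrow> bool) \<times> bool list, (bool list \<Rightarrow> bool list \<Rightarrow> bool) \<times> bool list) ptree pmf"
  assumes hyp: "\<forall>(f, g) \<in> Fq n q. measure_pmf.prob (pair_pmf Prot (mu p n))
            {(P, (x, y)). run P (f, x) (g, y) \<noteq> g x y} \<le> b"
    and hb: "\<forall>(f, g) \<in> Fq n q. \<forall>(x, y) \<in> set_pmf (mu p n). \<forall>P \<in> set_pmf Prot. bits P (f, x) (g, y) \<le> k"
    and b0: "0 \<le> b"
  shows "emeasure (pair_pmf Prot (nu p q n)) {(P, (a, c)). run (tk k P) a c \<noteq> Fbig a c}
     \<le> ennreal b + emeasure (rand_subset (q/2) n) {D. q * real n < real (card D)}"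
proof -
  define Err where "Err = {(P, (a, c)). run (tk k P) a c \<noteq> Fbig a c}"
  define Big :: "nat set set" where "Big = {D. q * real n < real (card D)}"
  define H :: "nat set \<Rightarrow> nat set \<Rightarrow> ctree \<times> bool list \<times> bool list \<Rightarrow> ctree \<times> (nat set \<times> bool list) \<times> (nat set \<times> bool list)"
    where "H S D = (\<lambda>(P, (x, y)). (P, ((S, x), (S - D \<union> (D - S), y))))" for S D
  have "pair_pmf Prot (nu p q n) = bind_pmf (pmf_of_set (Pow {..<n})) (\<lambda>S. bind_pmf (rand_subset (q / 2) n)
      (\<lambda>D. map_pmf (H S D) (pair_pmf Prot (mu p n))))"
    unfolding nu_def H_def by (subst pair_decomp) (simp add: split_def)
  then have "emeasure (pair_pmf Prot (nu p q n)) Err =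
     (\<integral>\<^sup>+S. (\<integral>\<^sup>+D. emeasure (pair_pmf Prot (mu p n)) (H S D -` Err) \<partial>rand_subset (q/2) n) \<partial>pmf_of_set (Pow {..<n}))"
    by simp
  also have "\<dots> \<le> (\<integral>\<^sup>+S. (\<integral>\<^sup>+D. ennreal b + indicator Big D \<partial>rand_subset (q/2) n) \<partial>pmf_of_set (Pow {..<n}))"
  proof (intro nn_integral_mono_AE AE_pmfI)
    fix S D
    assume S: "S \<in> set_pmf (pmf_of_set (Pow {..<n}))" and D: "D \<in> set_pmf (rand_subset (q / 2) n)"
    from S have Sn: "S \<subseteq> {..<n}" by (subst (asm) set_pmf_of_set) auto
    from D have Dn: "D \<subseteq> {..<n}" by (rule set_rand_subset)
    define T where "T = S - D \<union> (D - S)"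
    show "emeasure (pair_pmf Prot (mu p n)) (H S D -` Err) \<le> ennreal b + indicator Big D"
    proof (cases "D \<in> Big")
      case True
      have "emeasure (pair_pmf Prot (mu p n)) (H S D -` Err) \<le> 1"
        by (rule measure_pmf.emeasure_le_1)
      also have "\<dots> \<le> ennreal b + indicator Big D" using True by simp
      finally show ?thesis .
    next
      case False
      have Tn: "T \<subseteq> {..<n}" using Sn Dn by (auto simp: T_def)
      have ST: "S - T \<union> (T - S) = D" by (auto simp: T_def)
      have inF: "(fS S, fS T) \<in> Fq n q"
        unfolding Fq_def using Sn Tn False ST by (auto simp: Big_def not_less)
      let ?E = "{(P, (x, y)). run P (fS S, x) (fS T, y) \<noteq> fS T x y}"
      have key: "z \<in> H S D -` Err \<longleftrightarrow> z \<in> ?E" if z: "z \<in> set_pmf (pair_pmf Prot (mu p n))" for z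
      proof -
        obtain P x y where zz: "z = (P, x, y)" by (cases z) auto
        have P: "P \<in> set_pmf Prot" and xy: "(x, y) \<in> set_pmf (mu p n)" using z zz by auto
        have bb: "bits (mapt P phi phi) (S, x) (T, y) \<le> k"
          using hb inF P xy by (fastforce simp: bits_mapt phi_def)
        have "run (tk k P) (S, x) (T, y) = run P (fS S, x) (fS T, y)"
          unfolding tk_def using run_trunc[OF bb] by (simp add: run_mapt phi_def)
        then show ?thesis
          by (simp add: zz H_def Err_def Fbig_def T_def)
      qed
      have eq: "H S D -` Err \<inter> set_pmf (pair_pmf Prot (mu p n)) = ?E \<inter> set_pmf (pair_pmf Prot (mu p n))"
        using key by blast
      have "measure (pair_pmf Prot (mu p n)) (H S D -` Err)
          = measure (pair_pmf Prot (mu p n)) (H S D -` Err \<inter> set_pmf (pair_pmf Prot (mu p n)))"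
        by (rule measure_Int_set_pmf[symmetric])
      also have "\<dots> = measure (pair_pmf Prot (mu p n)) (?E \<inter> set_pmf (pair_pmf Prot (mu p n)))"
        by (simp only: eq)
      also have "\<dots> = measure (pair_pmf Prot (mu p n)) ?E"
        by (rule measure_Int_set_pmf)
      also have "\<dots> \<le> b" using bspec[OF hyp inF] by simp
      finally show ?thesis
        using False b0 by (simp add: measure_pmf.emeasure_eq_measure)
    qed
  qed
  also have "\<dots> = ennreal b + emeasure (rand_subset (q/2) n) Big"
    by (simp add: nn_integral_add measure_pmf.emeasure_space_1)
  finally show ?thesis unfolding Err_def Big_def .
qed



lemma step:
  fixes Prot :: "ctree pmf"
  assumes h1: "\<forall>(f, g) \<in> Fq n q. measure_pmf.prob (pair_pmf Prot (mu p n))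
            {(P, (x, y)). run P (f, x) (g, y) \<noteq> g x y} \<le> 1/2 - \<epsilon>"
    and h2: "\<forall>(f, g) \<in> Fq n q. \<forall>(x, y) \<in> set_pmf (mu p n). \<forall>P \<in> set_pmf Prot. bits P (f, x) (g, y) \<le> k"
    and q0: "0 < q" and q1: "q \<le> 1"
  shows "CC_dist (nu p q n) Fbig (1/2 - \<epsilon> + 2 powr (- (1/20) * q * real n)) \<le> enat k"
proof -
  define B where "B = 1/2 - \<epsilon> + 2 powr (- (1/20) * q * real n)"
  have e0: "(fS {}, fS {}) \<in> Fq n q"
    unfolding Fq_def
    by (rule CollectI, rule exI[of _ "{}"], rule exI[of _ "{}"]) (use q0 in simp)
  have m: "measure_pmf.prob (pair_pmf Prot (mu p n))
          {(P, (x, y)). run P (fS {}, x) (fS {}, y) \<noteq> fS {} x y} \<le> 1/2 - \<epsilon>"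
    using bspec[OF h1 e0] by simp
  have b0: "0 \<le> 1/2 - \<epsilon>"
    by (rule order_trans[OF measure_nonneg m])
  have B0: "0 \<le> B" using b0 by (simp add: B_def)
  have "emeasure (pair_pmf Prot (nu p q n)) {(P, (a, c)). run (tk k P) a c \<noteq> Fbig a c}
     \<le> ennreal (1/2 - \<epsilon>) + emeasure (rand_subset (q/2) n) {D. q * real n < real (card D)}"
    by (rule main_bound[OF h1 h2 b0])
  also have "\<dots> \<le> ennreal (1/2 - \<epsilon>) + ennreal (2 powr (- (1/20) * q * real n))"
    by (rule add_left_mono) (rule tail[OF q0 q1])
  also have "\<dots> = ennreal B"
    using b0 by (simp add: B_def ennreal_plus)
  finally have "\<exists>P\<in>set_pmf Prot. emeasure (nu p q n) {z. (P, z) \<in> {(P, (a, c)). run (tk k P) a c \<noteq> Fbig a c}} \<le> ennreal B"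
    by (rule ex_good)
  then obtain P where PB: "emeasure (nu p q n) {z. (P, z) \<in> {(P, (a, c)). run (tk k P) a c \<noteq> Fbig a c}} \<le> ennreal B"
    by blast
  have st: "{z. (P, z) \<in> {(P, (a, c)). run (tk k P) a c \<noteq> Fbig a c}} = {(a, c). run (tk k P) a c \<noteq> Fbig a c}"
    by auto
  have pr: "measure_pmf.prob (nu p q n) {(a, c). run (tk k P) a c \<noteq> Fbig a c} \<le> B"
    using PB B0 unfolding st by (simp add: measure_pmf.emeasure_eq_measure)
  have bt: "\<forall>(a, b) \<in> set_pmf (nu p q n). bits (tk k P) a b \<le> k"
    unfolding tk_def by (auto simp: bits_trunc)
  have "enat k \<in> {enat k | k. \<exists>P :: (nat set \<times> bool list, nat set \<times> bool list) ptree.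
       measure_pmf.prob (nu p q n) {(a, b). run P a b \<noteq> Fbig a b} \<le> B
     \<and> (\<forall>(a, b) \<in> set_pmf (nu p q n). bits P a b \<le> k)}"
    using pr bt by blast
  then show ?thesis
    unfolding CC_dist_def B_def by (rule Inf_lower)
qed

theorem mainTheorem10:
  shows "\<exists>c::real. c > 0 \<and>
    (\<forall>(n::nat) (p::real) (q::real) (\<epsilon>::real).
       0 < p \<and> p < 1 \<and> 0 < q \<and> q \<le> 1 \<and> 0 < \<epsilon> \<longrightarrow>
       CCU (mu p n) (Fq n q) (1/2 - \<epsilon>)
         \<ge> CC_dist (nu p q n) Fbig (1/2 - \<epsilon> + 2 powr (- c * q * real n)))"
proof (intro exI[of _ "1/20"] conjI allI impI)
  show "(0::real) < 1/20" by simp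
  fix n :: nat and p q \<epsilon> :: real
  assume asm: "0 < p \<and> p < 1 \<and> 0 < q \<and> q \<le> 1 \<and> 0 < \<epsilon>"
  then have q0: "0 < q" and q1: "q \<le> 1" by auto
  show "CC_dist (nu p q n) Fbig (1/2 - \<epsilon> + 2 powr (- (1/20) * q * real n)) \<le> CCU (mu p n) (Fq n q) (1/2 - \<epsilon>)"
    unfolding CCU_def
  proof (rule Inf_greatest)
    fix w assume "w \<in> {enat k | k. \<exists>Prot :: ctree pmf.
       (\<forall>(f, g) \<in> Fq n q. measure_pmf.prob (pair_pmf Prot (mu p n))
            {(P, (x, y)). run P (f, x) (g, y) \<noteq> g x y} \<le> 1/2 - \<epsilon>)
     \<and> (\<forall>(f, g) \<in> Fq n q. \<forall>(x, y) \<in> set_pmf (mu p n). \<forall>P \<in> set_pmf Prot. bits P (f, x) (g, y) \<le> k)}"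
    then show "CC_dist (nu p q n) Fbig (1/2 - \<epsilon> + 2 powr (- (1/20) * q * real n)) \<le> w"
      unfolding mem_Collect_eq
      by (elim exE conjE) (simp only: step[OF _ _ q0 q1])
  qed
qed


end
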